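(* For the impulsive system $\dot S=S(A-S)-\beta_0 IS$, $\dot I=\beta_0 IS-(\sigma+g)I$ ($t\ne nT$), $S(nT)=(1-p)S(nT^-)$, $I(nT)=I(nT^-)$, let $$\mathcal{R}_p=\frac{\beta_0}{\sigma+g}\frac1T\int_0^T\mathcal{S}(t)\,dt,\qquad \mathcal{S}(t)=\frac{A[e^{AT}(1-p)-1]}{e^{AT}(1-p)-1+pe^{A(T-t)}}\ (0\le t<T).$$ For $p\in[0,1)$ and $T>0$: (1) $\mathcal{R}_p=\mathcal{R}_0\left[\frac{\ln(1-p)}{AT}+1\right]$; (2) if $\mathcal{R}_p=1$, then the map $F_I(y)=y\exp\left\{\beta_0\int_0^T\mathcal{S}(t)\,dt\right\}e^{-(\sigma+g)T}$ has infinitely many fixed points; (3) for $T>0$ and $p>0$, $\frac{\partial\mathcal{R}_p}{\partial T}>0$ and $\frac{\partial\mathcal{R}_p}{\partial p}<0$; (4) $\lim_{T\to+\infty}\mathcal{R}_p=\mathcal{R}_0$; (5) if $p=0$ then $\mathcal{R}_p=\mathcal{R}_0$.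
   Context: Parameters: $A\in(0,1]$, $\beta_0>0$, $\sigma,g\ge0$ with $\sigma+g>0$; $\mathcal{R}_0=A\beta_0/(\sigma+g)$. $F_I$ is the time-$T$ stroboscopic map of the Infectious variable along the disease-free periodic solution $\mathcal{S}$ (extended $T$-periodically). *)

theory Defs
  imports "HOL-Analysis.Analysis"
begin

text \<open>Disease-free periodic solution on one period, 0 \<le> t < T.\<close>
definition Sdf :: "real \<Rightarrow> real \<Rightarrow> real \<Rightarrow> real \<Rightarrow> real" where
  "Sdf A p T t = A * (exp (A*T) * (1 - p) - 1) / (exp (A*T) * (1 - p) - 1 + p * exp (A * (T - t)))"

definition R0 :: "real \<Rightarrow> real \<Rightarrow> real \<Rightarrow> real \<Rightarrow> real" where
  "R0 A \<beta>0 \<sigma> g = A * \<beta>0 / (\<sigma> + g)"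

definition Rp :: "real \<Rightarrow> real \<Rightarrow> real \<Rightarrow> real \<Rightarrow> real \<Rightarrow> real \<Rightarrow> real" where
  "Rp A \<beta>0 \<sigma> g p T = \<beta>0 / (\<sigma> + g) * (1 / T) * integral {0..T} (Sdf A p T)"

text \<open>Stroboscopic map of the infectious variable along the disease-free solution.\<close>
definition F_I :: "real \<Rightarrow> real \<Rightarrow> real \<Rightarrow> real \<Rightarrow> real \<Rightarrow> real \<Rightarrow> real \<Rightarrow> real" where
  "F_I A \<beta>0 \<sigma> g p T y = y * exp (\<beta>0 * integral {0..T} (Sdf A p T)) * exp (- (\<sigma> + g) * T)"

end

theory Submission
  imports Defs
begin

lemma int_Sdf:
  fixes A p T :: real
  assumes A: "0 < A" and p: "0 \<le> p" "p < 1" and T: "0 < T"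
  shows "integral {0..T} (Sdf A p T) = A*T + ln (1-p)"
proof -
  define E where "E = exp (A*T)"
  define c where "c = E*(1-p) - 1"
  define h where "h t = c * exp (A*t) + p*E" for t
  have E1: "E > 1" unfolding E_def using A T by simp
  have hpos: "h t > 0" if "t \<in> {0..T}" for t
  proof -
    have u1: "exp (A*t) \<ge> 1" using that A by simp
    have u2: "exp (A*t) \<le> E" unfolding E_def using that A by (simp add: mult_left_mono)
    show ?thesis
    proof (cases "c \<ge> 0")
      case True
      have "h t \<ge> c + p*E" unfolding h_def using True u1 by (simp add: mult_left_mono[OF u1 True, simplified])
      moreover have "c + p*E = E - 1" unfolding c_def by (simp add: algebra_simps)
      ultimately show ?thesis using E1 by linarith
    next
      case False
      have "c * exp (A*t) \<ge> c * E" using False u2 by (simp add: mult_left_mono_neg)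
      hence "h t \<ge> c*E + p*E" unfolding h_def by simp
      moreover have "c*E + p*E = E*(1-p)*(E-1)" unfolding c_def by (simp add: algebra_simps)
      moreover have "E*(1-p)*(E-1) > 0" using E1 p by simp
      ultimately show ?thesis by linarith
    qed
  qed
  have Seq: "Sdf A p T t = A * c * exp (A*t) / h t" if "t \<in> {0..T}" for t
  proof -
    have ee: "exp (A*(T-t)) * exp (A*t) = E" unfolding E_def by (simp add: exp_add[symmetric] algebra_simps)
    have "(c + p*exp (A*(T-t))) * exp (A*t) = h t" unfolding h_def using ee
      by (simp add: algebra_simps)
    hence "c + p*exp (A*(T-t)) = h t / exp (A*t)" by (simp add: field_simps)
    thus ?thesis unfolding Sdf_def E_def[symmetric] c_def[symmetric] by simp
  qed
  have der: "((\<lambda>t. ln (h t)) has_vector_derivative A * c * exp (A*t) / h t) (at t within {0..T})"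
    if "t \<in> {0..T}" for t
  proof -
    have "((\<lambda>t. ln (h t)) has_real_derivative (1 / h t) * (c * (exp (A*t) * A))) (at t)"
      unfolding h_def
      by (rule derivative_eq_intros refl | use hpos[OF that] in \<open>simp add: h_def\<close>)+
    thus ?thesis
      by (auto simp: has_real_derivative_iff_has_vector_derivative[symmetric] field_simps
               intro: has_field_derivative_at_within)
  qed
  have "((\<lambda>t. A * c * exp (A*t) / h t) has_integral ln (h T) - ln (h 0)) {0..T}"
    using T der by (intro fundamental_theorem_of_calculus) auto
  hence I: "integral {0..T} (Sdf A p T) = ln (h T) - ln (h 0)"
    by (subst integral_cong[OF Seq]) (auto intro: integral_unique)
  have hT: "h T = E*(1-p)*(E-1)" unfolding h_def c_def E_def by (simp add: algebra_simps)
  have h0: "h 0 = E - 1" unfolding h_def c_def by (simp add: algebra_simps)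
  have "ln (h T) = ln E + ln (1-p) + ln (E-1)" using hT E1 p by (simp add: ln_mult)
  thus ?thesis using I h0 E_def by simp
qed

lemma Rp_eq:
  fixes A \<beta>0 \<sigma> g p T :: real
  assumes A: "0 < A" and p: "0 \<le> p" "p < 1" and T: "0 < T" and sg: "0 < \<sigma> + g"
  shows "Rp A \<beta>0 \<sigma> g p T = R0 A \<beta>0 \<sigma> g * (ln (1 - p) / (A * T) + 1)"
proof -
  have e: "(1/T)*(A*T + ln (1-p)) = A*(ln (1-p)/(A*T)+1)" using A T by (simp add: field_simps)
  have "Rp A \<beta>0 \<sigma> g p T = \<beta>0/(\<sigma>+g) * ((1/T)*(A*T + ln (1-p)))"
    unfolding Rp_def int_Sdf[OF A p T] by (simp only: mult.assoc)
  also have "\<dots> = \<beta>0/(\<sigma>+g) * (A*(ln (1-p)/(A*T)+1))" by (simp only: e)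
  also have "\<dots> = R0 A \<beta>0 \<sigma> g * (ln (1 - p) / (A * T) + 1)" unfolding R0_def by simp
  finally show ?thesis .
qed

theorem lemma7:
  fixes A \<beta>0 \<sigma> g :: real
  assumes "0 < A" "A \<le> 1" "0 < \<beta>0" "0 \<le> \<sigma>" "0 \<le> g" "0 < \<sigma> + g"
  shows
    "(\<forall>p T. 0 \<le> p \<and> p < 1 \<and> 0 < T \<longrightarrow>
        Rp A \<beta>0 \<sigma> g p T = R0 A \<beta>0 \<sigma> g * (ln (1 - p) / (A * T) + 1))
   \<and> (\<forall>p T. 0 \<le> p \<and> p < 1 \<and> 0 < T \<and> Rp A \<beta>0 \<sigma> g p T = 1 \<longrightarrow>
        infinite {y::real. 0 \<le> y \<and> F_I A \<beta>0 \<sigma> g p T y = y})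
   \<and> (\<forall>p T. 0 < p \<and> p < 1 \<and> 0 < T \<longrightarrow>
        (\<exists>D. ((\<lambda>T'. Rp A \<beta>0 \<sigma> g p T') has_real_derivative D) (at T) \<and> D > 0)
      \<and> (\<exists>D. ((\<lambda>p'. Rp A \<beta>0 \<sigma> g p' T) has_real_derivative D) (at p) \<and> D < 0))
   \<and> (\<forall>p. 0 \<le> p \<and> p < 1 \<longrightarrow>
        ((\<lambda>T. Rp A \<beta>0 \<sigma> g p T) \<longlongrightarrow> R0 A \<beta>0 \<sigma> g) at_top)
   \<and> (\<forall>T. 0 < T \<longrightarrow> Rp A \<beta>0 \<sigma> g 0 T = R0 A \<beta>0 \<sigma> g)"
proof (intro conjI allI impI)
  have A: "0 < A" and sg: "0 < \<sigma> + g" and b: "0 < \<beta>0" using assms by auto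
  have R0pos: "R0 A \<beta>0 \<sigma> g > 0" unfolding R0_def using A sg b by simp
  show "Rp A \<beta>0 \<sigma> g p T = R0 A \<beta>0 \<sigma> g * (ln (1 - p) / (A * T) + 1)"
    if "0 \<le> p \<and> p < 1 \<and> 0 < T" for p T using Rp_eq[OF A _ _ _ sg] that by blast
  show "Rp A \<beta>0 \<sigma> g 0 T = R0 A \<beta>0 \<sigma> g" if "0 < T" for T
    using Rp_eq[OF A _ _ _ sg, of 0 T] that by simp
  show "infinite {y::real. 0 \<le> y \<and> F_I A \<beta>0 \<sigma> g p T y = y}"
    if H: "0 \<le> p \<and> p < 1 \<and> 0 < T \<and> Rp A \<beta>0 \<sigma> g p T = 1" for p T
  proof -
    have "\<beta>0 / (\<sigma> + g) * (1 / T) * integral {0..T} (Sdf A p T) = 1"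
      using H[THEN conjunct2, THEN conjunct2, THEN conjunct2] unfolding Rp_def .
    moreover have "\<beta>0 * integral {0..T} (Sdf A p T) = (\<sigma> + g) * T * (\<beta>0 / (\<sigma> + g) * (1 / T) * integral {0..T} (Sdf A p T))"
    proof -
      have aux: "K \<noteq> 0 \<Longrightarrow> K*T*(\<beta>0/K*(1/T)*I) = \<beta>0*I" for K I using H by simp
      show ?thesis using aux[of "\<sigma>+g"] sg by simp
    qed
    ultimately have "\<beta>0 * integral {0..T} (Sdf A p T) = (\<sigma> + g) * T" by (metis mult_1_right)
    hence "F_I A \<beta>0 \<sigma> g p T y = y" for y unfolding F_I_def
      by (simp add: exp_add[symmetric] algebra_simps)
    hence "{y::real. 0 \<le> y \<and> F_I A \<beta>0 \<sigma> g p T y = y} = {0..}" by auto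
    thus ?thesis using infinite_Ici[of "0::real"] by simp
  qed
  show "\<exists>D. ((\<lambda>T'. Rp A \<beta>0 \<sigma> g p T') has_real_derivative D) (at T) \<and> D > 0"
    if H: "0 < p \<and> p < 1 \<and> 0 < T" for p T
  proof -
    have d: "((\<lambda>T'. R0 A \<beta>0 \<sigma> g * (ln (1 - p) / (A * T') + 1)) has_real_derivative
        R0 A \<beta>0 \<sigma> g * (- ln (1 - p) * A / (A*T)^2)) (at T)"
      using H A by (auto intro!: derivative_eq_intros simp: power2_eq_square field_simps)
    have d2: "((\<lambda>T'. Rp A \<beta>0 \<sigma> g p T') has_real_derivative
        R0 A \<beta>0 \<sigma> g * (- ln (1 - p) * A / (A*T)^2)) (at T)"
      by (rule has_field_derivative_transform_within_open[OF d, of "{0<..}"]) (use H in \<open>auto simp: Rp_eq[OF A _ _ _ sg]\<close>)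
    have "ln (1-p) < 0" using H by simp
    hence "- ln (1 - p) * A > 0" using A by (simp add: mult_neg_pos)
    moreover have "(A*T)^2 > 0" using A H by simp
    ultimately have "- ln (1 - p) * A / (A*T)^2 > 0" by (rule divide_pos_pos)
    hence "R0 A \<beta>0 \<sigma> g * (- ln (1 - p) * A / (A*T)^2) > 0" using R0pos by (rule mult_pos_pos[rotated])
    thus ?thesis using d2 by blast
  qed
  show "\<exists>D. ((\<lambda>p'. Rp A \<beta>0 \<sigma> g p' T) has_real_derivative D) (at p) \<and> D < 0"
    if H: "0 < p \<and> p < 1 \<and> 0 < T" for p T
  proof -
    have d: "((\<lambda>p'. R0 A \<beta>0 \<sigma> g * (ln (1 - p') / (A * T) + 1)) has_real_derivative
        R0 A \<beta>0 \<sigma> g * (- 1 / (1 - p) / (A*T))) (at p)"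
      using H A by (auto intro!: derivative_eq_intros simp: field_simps)
    have d2: "((\<lambda>p'. Rp A \<beta>0 \<sigma> g p' T) has_real_derivative
        R0 A \<beta>0 \<sigma> g * (- 1 / (1 - p) / (A*T))) (at p)"
      by (rule has_field_derivative_transform_within_open[OF d, of "{0<..<1}"]) (use H in \<open>auto simp: Rp_eq[OF A _ _ _ sg]\<close>)
    have "R0 A \<beta>0 \<sigma> g * (- 1 / (1 - p) / (A*T)) < 0" using R0pos A H
      by (simp add: mult_pos_neg divide_neg_pos)
    thus ?thesis using d2 by blast
  qed
  show "((\<lambda>T. Rp A \<beta>0 \<sigma> g p T) \<longlongrightarrow> R0 A \<beta>0 \<sigma> g) at_top"
    if H: "0 \<le> p \<and> p < 1" for p
  proof -
    have f: "filterlim (\<lambda>T::real. A * T) at_infinity at_top"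
      by (rule filterlim_at_top_imp_at_infinity,
          rule filterlim_tendsto_pos_mult_at_top[OF tendsto_const A filterlim_ident])
    have "((\<lambda>T. ln (1 - p) / (A * T)) \<longlongrightarrow> 0) at_top"
      by (rule tendsto_divide_0[OF tendsto_const f])
    hence "((\<lambda>T. R0 A \<beta>0 \<sigma> g * (ln (1 - p) / (A * T) + 1)) \<longlongrightarrow> R0 A \<beta>0 \<sigma> g * (0 + 1)) at_top"
      by (intro tendsto_intros)
    hence l: "((\<lambda>T. R0 A \<beta>0 \<sigma> g * (ln (1 - p) / (A * T) + 1)) \<longlongrightarrow> R0 A \<beta>0 \<sigma> g) at_top" by simp
    have ev: "eventually (\<lambda>T. R0 A \<beta>0 \<sigma> g * (ln (1 - p) / (A * T) + 1) = Rp A \<beta>0 \<sigma> g p T) at_top"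
      by (rule eventually_mono[OF eventually_gt_at_top[of 0]]) (use H in \<open>simp add: Rp_eq[OF A _ _ _ sg]\<close>)
    show ?thesis by (rule Lim_transform_eventually[OF l ev])
  qed
qed

end
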